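(* Let $G$ be a discrete group and let $X$ be a minimal, essentially free $G$-flow. Then $\tilde S_G(X)$ is a free $G$-flow. Moreover, if $G$ is countable, then $\tilde S_G(X)$ admits a metrizable factor which is also free.
   Context: A $G$-flow is essentially free if for every $g\neq e$ the set of points fixed by $g$ has empty interior, and free if every point has trivial stabilizer. For a minimal $G$-flow $X$ ($G$ discrete), $\tilde S_G(X)$ denotes the Stone space of the Boolean algebra of regular open subsets of $X$, with the induced $G$-action; the map $\pi_X\colon\tilde S_G(X)\to X$ sends an ultrafilter $p$ to the unique $x\in X$ all of whose regular open neighborhoods belong to $p$. ($\tilde S_G(X)$ is the universal highly proximal extension of $X$.) A factor of a flow $Y$ is a flow $Z$ with a continuous surjective $G$-map $Y\to Z$. *)

theory Defs
  imports "HOL-Analysis.Analysis" "HOL-Algebra.Group"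
begin

definition G_flow :: "('g, 'b) monoid_scheme \<Rightarrow> 'x topology \<Rightarrow> ('g \<Rightarrow> 'x \<Rightarrow> 'x) \<Rightarrow> bool" where
  "G_flow G X act \<longleftrightarrow> group G \<and> compact_space X \<and> Hausdorff_space X
     \<and> (\<forall>g\<in>carrier G. continuous_map X X (act g))
     \<and> (\<forall>x\<in>topspace X. act \<one>\<^bsub>G\<^esub> x = x)
     \<and> (\<forall>g\<in>carrier G. \<forall>h\<in>carrier G. \<forall>x\<in>topspace X.
           act (g \<otimes>\<^bsub>G\<^esub> h) x = act g (act h x))"

definition minimal_flow :: "('g, 'b) monoid_scheme \<Rightarrow> 'x topology \<Rightarrow> ('g \<Rightarrow> 'x \<Rightarrow> 'x) \<Rightarrow> bool" where
  "minimal_flow G X act \<longleftrightarrow> G_flow G X act \<and> topspace X \<noteq> {}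
     \<and> (\<forall>Y. closedin X Y \<and> Y \<noteq> {} \<and> (\<forall>g\<in>carrier G. act g ` Y \<subseteq> Y) \<longrightarrow> Y = topspace X)"

definition essentially_free :: "('g, 'b) monoid_scheme \<Rightarrow> 'x topology \<Rightarrow> ('g \<Rightarrow> 'x \<Rightarrow> 'x) \<Rightarrow> bool" where
  "essentially_free G X act \<longleftrightarrow>
     (\<forall>g\<in>carrier G. g \<noteq> \<one>\<^bsub>G\<^esub> \<longrightarrow> X interior_of {x\<in>topspace X. act g x = x} = {})"

definition free_flow :: "('g, 'b) monoid_scheme \<Rightarrow> 'x topology \<Rightarrow> ('g \<Rightarrow> 'x \<Rightarrow> 'x) \<Rightarrow> bool" where
  "free_flow G X act \<longleftrightarrow> (\<forall>x\<in>topspace X. \<forall>g\<in>carrier G. act g x = x \<longrightarrow> g = \<one>\<^bsub>G\<^esub>)"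

definition regular_open :: "'x topology \<Rightarrow> 'x set \<Rightarrow> bool" where
  "regular_open X U \<longleftrightarrow> X interior_of (X closure_of U) = U"

definition RO :: "'x topology \<Rightarrow> 'x set set" where
  "RO X = {U. regular_open X U}"

definition RO_filter :: "'x topology \<Rightarrow> 'x set set \<Rightarrow> bool" where
  "RO_filter X F \<longleftrightarrow> F \<subseteq> RO X \<and> topspace X \<in> F \<and> {} \<notin> F
     \<and> (\<forall>U\<in>F. \<forall>V\<in>F. U \<inter> V \<in> F)
     \<and> (\<forall>U\<in>F. \<forall>V\<in>RO X. U \<subseteq> V \<longrightarrow> V \<in> F)"

definition RO_ultrafilter :: "'x topology \<Rightarrow> 'x set set \<Rightarrow> bool" where
  "RO_ultrafilter X p \<longleftrightarrow> RO_filter X p \<and> (\<forall>F. RO_filter X F \<and> p \<subseteq> F \<longrightarrow> F = p)"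

text \<open>The Stone space of RO(X): ultrafilters, with basic clopen sets [U] = {p. U \<in> p}.\<close>
definition StoneRO :: "'x topology \<Rightarrow> 'x set set topology" where
  "StoneRO X = subtopology
      (topology_generated_by {{p. RO_ultrafilter X p \<and> U \<in> p} | U. U \<in> RO X})
      {p. RO_ultrafilter X p}"

definition StoneRO_act :: "('g \<Rightarrow> 'x \<Rightarrow> 'x) \<Rightarrow> 'g \<Rightarrow> 'x set set \<Rightarrow> 'x set set" where
  "StoneRO_act act g p = (\<lambda>U. act g ` U) ` p"

definition factor_map ::
  "('g, 'b) monoid_scheme \<Rightarrow> 'y topology \<Rightarrow> ('g \<Rightarrow> 'y \<Rightarrow> 'y) \<Rightarrow> 'z topology \<Rightarrow> ('g \<Rightarrow> 'z \<Rightarrow> 'z)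
    \<Rightarrow> ('y \<Rightarrow> 'z) \<Rightarrow> bool" where
  "factor_map G Y actY Z actZ f \<longleftrightarrow> G_flow G Z actZ \<and> continuous_map Y Z f
     \<and> f ` topspace Y = topspace Z
     \<and> (\<forall>g\<in>carrier G. \<forall>y\<in>topspace Y. f (actY g y) = actZ g (f y))"

end

theory Submission
  imports Defs
begin


lemma RO_subset: "U \<in> RO X \<Longrightarrow> U \<subseteq> topspace X"
  by (metis RO_def mem_Collect_eq regular_open_def interior_of_subset_topspace)
lemma RO_open: "U \<in> RO X \<Longrightarrow> openin X U"
  by (metis RO_def mem_Collect_eq regular_open_def openin_interior_of)
lemma RO_topspace: "topspace X \<in> RO X"
  by (simp add: RO_def regular_open_def closure_of_topspace interior_of_topspace)
lemma RO_empty: "{} \<in> RO X"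
  by (simp add: RO_def regular_open_def)
lemma open_sub_intcl: "openin X U \<Longrightarrow> U \<subseteq> X interior_of (X closure_of U)"
  by (simp add: interior_of_maximal closure_of_subset openin_subset)

lemma RO_intcl: "X interior_of (X closure_of S) \<in> RO X"
proof -
  let ?A = "X interior_of (X closure_of S)"
  have "X interior_of (X closure_of ?A) \<subseteq> X interior_of (X closure_of (X closure_of S))"
    by (intro interior_of_mono closure_of_mono interior_of_subset)
  also have "\<dots> = ?A" by simp
  finally show ?thesis using open_sub_intcl[of X ?A]
    by (auto simp: RO_def regular_open_def)
qed

lemma RO_Int: "U \<in> RO X \<Longrightarrow> V \<in> RO X \<Longrightarrow> U \<inter> V \<in> RO X"
proof -
  assume U: "U \<in> RO X" and V: "V \<in> RO X"
  have "X interior_of (X closure_of (U \<inter> V)) \<subseteq> X interior_of (X closure_of U)"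
    by (intro interior_of_mono closure_of_mono) auto
  moreover have "X interior_of (X closure_of (U \<inter> V)) \<subseteq> X interior_of (X closure_of V)"
    by (intro interior_of_mono closure_of_mono) auto
  moreover have "U \<inter> V \<subseteq> X interior_of (X closure_of (U \<inter> V))"
    using U V by (intro open_sub_intcl) (auto simp: RO_open)
  ultimately show ?thesis using U V by (auto simp: RO_def regular_open_def)
qed

lemma RO_int_closed: "closedin X C \<Longrightarrow> X interior_of C \<in> RO X"
proof -
  assume C: "closedin X C"
  have "X closure_of (X interior_of C) \<subseteq> C"
    using C by (simp add: closure_of_minimal interior_of_subset)
  then have "X interior_of (X closure_of (X interior_of C)) \<subseteq> X interior_of C"
    by (rule interior_of_mono)
  then show ?thesis using open_sub_intcl[of X "X interior_of C"]
    by (auto simp: RO_def regular_open_def)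
qed

lemma intcl_disjoint:
  assumes "openin X A" "openin X B" "A \<inter> B = {}"
  shows "X interior_of (X closure_of A) \<inter> X interior_of (X closure_of B) = {}"
proof -
  have "B \<inter> X closure_of A = {}" using assms openin_Int_closure_of_eq_empty[of X B A] by (simp add: Int_commute)
  moreover have "X interior_of (X closure_of A) \<subseteq> X closure_of A" by (rule interior_of_subset)
  ultimately have "B \<inter> X interior_of (X closure_of A) = {}" by blast
  then have "X interior_of (X closure_of A) \<inter> X closure_of B = {}"
    using openin_Int_closure_of_eq_empty[of X "X interior_of (X closure_of A)" B] by (simp add: Int_commute)
  moreover have "X interior_of (X closure_of B) \<subseteq> X closure_of B" by (rule interior_of_subset)
  ultimately show ?thesis by blast
qed

lemma homeo_intcl:
  assumes "homeomorphic_map X X h" "S \<subseteq> topspace X"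
  shows "X interior_of (X closure_of (h ` S)) = h ` (X interior_of (X closure_of S))"
  using assms by (simp add: homeomorphic_map_closure_of homeomorphic_map_interior_of closure_of_subset_topspace)

lemma RO_image: "homeomorphic_map X X h \<Longrightarrow> U \<in> RO X \<Longrightarrow> h ` U \<in> RO X"
  using homeo_intcl[of X h U] RO_subset[of U X]
  by (simp add: RO_def regular_open_def)

lemma filter_RO: "RO_filter X F \<Longrightarrow> U \<in> F \<Longrightarrow> U \<in> RO X"
  by (auto simp: RO_filter_def)
lemma filter_ne: "RO_filter X F \<Longrightarrow> U \<in> F \<Longrightarrow> U \<noteq> {}"
  by (auto simp: RO_filter_def)
lemma filter_Int: "RO_filter X F \<Longrightarrow> U \<in> F \<Longrightarrow> V \<in> F \<Longrightarrow> U \<inter> V \<in> F"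
  by (auto simp: RO_filter_def)
lemma filter_top: "RO_filter X F \<Longrightarrow> topspace X \<in> F"
  by (auto simp: RO_filter_def)
lemma filter_up: "RO_filter X F \<Longrightarrow> U \<in> F \<Longrightarrow> V \<in> RO X \<Longrightarrow> U \<subseteq> V \<Longrightarrow> V \<in> F"
  by (auto simp: RO_filter_def)
lemma ult_filter: "RO_ultrafilter X p \<Longrightarrow> RO_filter X p"
  by (simp add: RO_ultrafilter_def)

lemma ult_prime:
  assumes p: "RO_ultrafilter X p" and U: "U \<in> RO X" and nU: "U \<notin> p"
  shows "\<exists>W\<in>p. W \<inter> U = {}"
proof (rule ccontr)
  assume "\<not> ?thesis"
  then have meet: "\<And>W. W \<in> p \<Longrightarrow> W \<inter> U \<noteq> {}" by blast
  have pf: "RO_filter X p" using p by (simp add: RO_ultrafilter_def)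
  define H where "H = {V \<in> RO X. \<exists>W\<in>p. W \<inter> U \<subseteq> V}"
  have "RO_filter X H"
    unfolding RO_filter_def
  proof (intro conjI ballI allI impI)
    show "H \<subseteq> RO X" by (auto simp: H_def)
    show "topspace X \<in> H" using pf by (auto simp: H_def RO_topspace RO_filter_def)
    show "{} \<notin> H" using meet by (auto simp: H_def)
  next
    fix A B assume "A \<in> H" "B \<in> H"
    then obtain W1 W2 where "W1 \<in> p" "W1 \<inter> U \<subseteq> A" "W2 \<in> p" "W2 \<inter> U \<subseteq> B" "A \<in> RO X" "B \<in> RO X"
      by (auto simp: H_def)
    then show "A \<inter> B \<in> H" using pf unfolding H_def
      by (intro CollectI conjI RO_Int bexI[of _ "W1 \<inter> W2"]) (auto simp: RO_filter_def)
  next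
    fix A B assume "A \<in> H" "B \<in> RO X" "A \<subseteq> B"
    then show "B \<in> H" by (auto simp: H_def)
  qed
  moreover have "p \<subseteq> H" using pf by (auto simp: H_def RO_filter_def)
  ultimately have "H = p" using p by (simp add: RO_ultrafilter_def)
  moreover have "U \<in> H" using U pf by (auto simp: H_def RO_filter_def)
  ultimately show False using nU by simp
qed

lemma ult_compl:
  assumes p: "RO_ultrafilter X p" and U: "U \<in> RO X" and nU: "U \<notin> p"
  shows "X interior_of (topspace X - U) \<in> p"
proof -
  obtain W where W: "W \<in> p" "W \<inter> U = {}" using ult_prime[OF assms] by blast
  have pf: "RO_filter X p" using p by (simp add: RO_ultrafilter_def)
  have "W \<subseteq> X interior_of (topspace X - U)"
    using W pf by (intro interior_of_maximal) (auto dest: filter_RO RO_subset RO_open)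
  moreover have "X interior_of (topspace X - U) \<in> RO X"
    using U by (intro RO_int_closed) (auto simp: RO_open)
  ultimately show ?thesis using W pf filter_up by blast
qed

lemma ult_exists:
  assumes F: "RO_filter X F"
  shows "\<exists>p. RO_ultrafilter X p \<and> F \<subseteq> p"
proof -
  define A where "A = {H. RO_filter X H \<and> F \<subseteq> H}"
  have "\<exists>M\<in>A. \<forall>Y\<in>A. M \<subseteq> Y \<longrightarrow> Y = M"
  proof (rule subset_Zorn)
    fix C assume C: "subset.chain A C"
    show "\<exists>U\<in>A. \<forall>Y\<in>C. Y \<subseteq> U"
    proof (cases "C = {}")
      case True then show ?thesis using F by (auto simp: A_def)
    next
      case False
      have CA: "C \<subseteq> A" using C by (simp add: subset.chain_def)
      have "RO_filter X (\<Union>C)"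
        unfolding RO_filter_def
      proof (intro conjI ballI allI impI)
        show "\<Union>C \<subseteq> RO X" using CA by (auto simp: A_def RO_filter_def)
        show "topspace X \<in> \<Union>C" using CA False by (auto simp: A_def RO_filter_def)
        show "{} \<notin> \<Union>C" using CA by (auto simp: A_def RO_filter_def)
      next
        fix U V assume "U \<in> \<Union>C" "V \<in> \<Union>C"
        then obtain H1 H2 where H: "H1 \<in> C" "H2 \<in> C" "U \<in> H1" "V \<in> H2" by auto
        then have "H1 \<subseteq> H2 \<or> H2 \<subseteq> H1" using C by (auto simp: subset.chain_def)
        then show "U \<inter> V \<in> \<Union>C"
        proof
          assume "H1 \<subseteq> H2"
          moreover have "RO_filter X H2" using CA H by (auto simp: A_def)
          ultimately have "U \<inter> V \<in> H2" using H filter_Int[of X H2 U V] by blast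
          then show ?thesis using H by blast
        next
          assume "H2 \<subseteq> H1"
          moreover have "RO_filter X H1" using CA H by (auto simp: A_def)
          ultimately have "U \<inter> V \<in> H1" using H filter_Int[of X H1 U V] by blast
          then show ?thesis using H by blast
        qed
      next
        fix U V assume "U \<in> \<Union>C" "V \<in> RO X" "U \<subseteq> V"
        then obtain H where "H \<in> C" "U \<in> H" by auto
        moreover have "RO_filter X H" using CA \<open>H \<in> C\<close> by (auto simp: A_def)
        ultimately have "V \<in> H" using filter_up[of X H U V] \<open>V \<in> RO X\<close> \<open>U \<subseteq> V\<close> by simp
        then show "V \<in> \<Union>C" using \<open>H \<in> C\<close> by blast
      qed
      moreover have "F \<subseteq> \<Union>C" using CA False by (auto simp: A_def)
      ultimately have "\<Union>C \<in> A" by (simp add: A_def)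
      then show ?thesis by blast
    qed
  qed
  then obtain M where M: "M \<in> A" "\<And>Y. Y \<in> A \<Longrightarrow> M \<subseteq> Y \<Longrightarrow> Y = M" by blast
  have "RO_ultrafilter X M"
    unfolding RO_ultrafilter_def using M by (auto simp: A_def)
  then show ?thesis using M by (auto simp: A_def)
qed



abbreviation img :: "('x \<Rightarrow> 'x) \<Rightarrow> 'x set set \<Rightarrow> 'x set set" where
  "img h p \<equiv> (\<lambda>U. h ` U) ` p"

lemma hm_left: "homeomorphic_maps X X h k \<Longrightarrow> homeomorphic_map X X h"
  unfolding homeomorphic_map_maps by (rule exI)
lemma hm_sym: "homeomorphic_maps X X h k \<Longrightarrow> homeomorphic_maps X X k h"
  unfolding homeomorphic_maps_def by blast
lemma hm_right: "homeomorphic_maps X X h k \<Longrightarrow> homeomorphic_map X X k"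
  by (rule hm_left, erule hm_sym)

lemma hm_kh: assumes "homeomorphic_maps X X h k" "U \<subseteq> topspace X" shows "k ` h ` U = U"
proof -
  have *: "\<And>x. x \<in> U \<Longrightarrow> k (h x) = x" using assms unfolding homeomorphic_maps_def by blast
  have "k ` h ` U = (\<lambda>x. k (h x)) ` U" by (simp add: image_image)
  also have "\<dots> = (\<lambda>x. x) ` U" by (rule image_cong) (simp_all add: *)
  finally show ?thesis by simp
qed

lemma hm_top: "homeomorphic_maps X X h k \<Longrightarrow> h ` topspace X = topspace X"
  using hm_left homeomorphic_imp_surjective_map by blast

lemma hm_sub: "homeomorphic_maps X X h k \<Longrightarrow> U \<subseteq> topspace X \<Longrightarrow> h ` U \<subseteq> topspace X"
  using hm_top by blast

lemma hm_inj: "homeomorphic_maps X X h k \<Longrightarrow> inj_on h (topspace X)"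
  unfolding homeomorphic_maps_def by (rule inj_on_inverseI[where g=k]) simp

lemma hm_img_Int: "homeomorphic_maps X X h k \<Longrightarrow> U \<subseteq> topspace X \<Longrightarrow> V \<subseteq> topspace X
   \<Longrightarrow> h ` (U \<inter> V) = h ` U \<inter> h ` V"
  by (meson hm_inj inj_on_image_Int)

lemma mem_img:
  assumes hk: "homeomorphic_maps X X h k" and p: "p \<subseteq> RO X" and U: "U \<subseteq> topspace X"
  shows "U \<in> img h p \<longleftrightarrow> k ` U \<in> p"
proof
  assume "U \<in> img h p"
  then obtain V where "V \<in> p" "U = h ` V" by auto
  moreover have "V \<subseteq> topspace X" using \<open>V \<in> p\<close> p RO_subset by blast
  ultimately show "k ` U \<in> p" using hm_kh[OF hk] by simp
next
  assume "k ` U \<in> p"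
  moreover have "h ` k ` U = U" using hm_kh[OF hm_sym[OF hk] U] .
  ultimately show "U \<in> img h p" by (metis image_eqI)
qed

lemma img_img:
  assumes hk: "homeomorphic_maps X X h k" and p: "p \<subseteq> RO X"
  shows "img k (img h p) = p"
proof -
  have "img k (img h p) = (\<lambda>U. k ` h ` U) ` p" by (simp add: image_image)
  also have "\<dots> = (\<lambda>U. U) ` p"
    using hm_kh[OF hk] RO_subset p by (intro image_cong) auto
  finally show ?thesis by simp
qed

lemma filter_img:
  assumes hk: "homeomorphic_maps X X h k" and F: "RO_filter X F"
  shows "RO_filter X (img h F)"
  unfolding RO_filter_def
proof (intro conjI ballI allI impI)
  have FR: "F \<subseteq> RO X" using F by (simp add: RO_filter_def)
  show "img h F \<subseteq> RO X" using FR RO_image[OF hm_left[OF hk]] by auto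
  show "topspace X \<in> img h F" using hm_top[OF hk] filter_top[OF F] by (metis image_eqI)
  show "{} \<notin> img h F" using F by (auto simp: RO_filter_def)
next
  fix A B assume "A \<in> img h F" "B \<in> img h F"
  then obtain U V where UV: "U \<in> F" "V \<in> F" "A = h ` U" "B = h ` V" by auto
  have FR: "F \<subseteq> RO X" using F by (simp add: RO_filter_def)
  moreover have "U \<subseteq> topspace X" "V \<subseteq> topspace X" using UV FR RO_subset by blast+
  ultimately have "A \<inter> B = h ` (U \<inter> V)"
    using hm_img_Int[OF hk] UV(3,4) by simp
  then show "A \<inter> B \<in> img h F" using filter_Int[OF F UV(1,2)] by auto
next
  fix A B assume A: "A \<in> img h F" and B: "B \<in> RO X" and AB: "A \<subseteq> B"
  then obtain U where U: "U \<in> F" "A = h ` U" by auto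
  have FR: "F \<subseteq> RO X" using F by (simp add: RO_filter_def)
  have Usub: "U \<subseteq> topspace X" using U FR RO_subset by blast
  have "U = k ` A" using U hm_kh[OF hk Usub] by simp
  then have "U \<subseteq> k ` B" using AB by auto
  moreover have "k ` B \<in> RO X" using RO_image[OF hm_right[OF hk] B] .
  ultimately have "k ` B \<in> F" using filter_up[OF F U(1)] by blast
  moreover have "B = h ` k ` B" using hm_kh[OF hm_sym[OF hk]] RO_subset[OF B] by simp
  ultimately show "B \<in> img h F" by blast
qed

lemma ult_img:
  assumes hk: "homeomorphic_maps X X h k" and p: "RO_ultrafilter X p"
  shows "RO_ultrafilter X (img h p)"
  unfolding RO_ultrafilter_def
proof (intro conjI allI impI)
  have pf: "RO_filter X p" using p by (simp add: RO_ultrafilter_def)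
  have pR: "p \<subseteq> RO X" using pf by (simp add: RO_filter_def)
  show "RO_filter X (img h p)" using filter_img[OF hk pf] .
  fix F assume F: "RO_filter X F \<and> img h p \<subseteq> F"
  have FR: "F \<subseteq> RO X" using F by (simp add: RO_filter_def)
  have "RO_filter X (img k F)" using filter_img[OF hm_sym[OF hk] conjunct1[OF F]] .
  moreover have "img k (img h p) \<subseteq> img k F" using conjunct2[OF F] by (rule image_mono)
  then have "p \<subseteq> img k F" using img_img[OF hk pR] by simp
  ultimately have "img k F = p" using p by (simp add: RO_ultrafilter_def)
  then show "F = img h p" using img_img[OF hm_sym[OF hk] FR] by simp
qed



definition bas :: "'x topology \<Rightarrow> 'x set \<Rightarrow> 'x set set set" where
  "bas X U = {p. RO_ultrafilter X p \<and> U \<in> p}"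

lemma ult_top: "RO_ultrafilter X p \<Longrightarrow> topspace X \<in> p"
  by (simp add: RO_ultrafilter_def RO_filter_def)

lemma ult_R: "RO_ultrafilter X p \<Longrightarrow> U \<in> p \<Longrightarrow> U \<in> RO X"
  by (auto simp: RO_ultrafilter_def RO_filter_def)

lemma Union_bas: "\<Union>{bas X U | U. U \<in> RO X} = {p. RO_ultrafilter X p}"
proof
  show "\<Union>{bas X U | U. U \<in> RO X} \<subseteq> {p. RO_ultrafilter X p}" by (auto simp: bas_def)
  show "{p. RO_ultrafilter X p} \<subseteq> \<Union>{bas X U | U. U \<in> RO X}"
  proof
    fix p assume "p \<in> {p. RO_ultrafilter X p}"
    then have "p \<in> bas X (topspace X)" by (simp add: bas_def ult_top)
    then show "p \<in> \<Union>{bas X U | U. U \<in> RO X}" using RO_topspace by blast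
  qed
qed

lemma Stone_eq: "StoneRO X = topology_generated_by {bas X U | U. U \<in> RO X}"
proof -
  have "topspace (topology_generated_by {bas X U | U. U \<in> RO X}) = {p. RO_ultrafilter X p}"
    by (simp only: topology_generated_by_topspace Union_bas)
  then show ?thesis unfolding StoneRO_def bas_def
    by (metis (no_types, lifting) subtopology_topspace bas_def)
qed

lemma topspace_Stone: "topspace (StoneRO X) = {p. RO_ultrafilter X p}"
  by (simp only: Stone_eq topology_generated_by_topspace Union_bas)

lemma open_bas: "U \<in> RO X \<Longrightarrow> openin (StoneRO X) (bas X U)"
  unfolding Stone_eq by (rule topology_generated_by_Basis) blast

lemma bas_Int: assumes UR: "U \<in> RO X" and VR: "V \<in> RO X" shows "bas X U \<inter> bas X V = bas X (U \<inter> V)"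
proof (rule equalityI; rule subsetI)
  fix p assume "p \<in> bas X U \<inter> bas X V"
  then have "RO_ultrafilter X p" "U \<in> p" "V \<in> p" by (auto simp: bas_def)
  then show "p \<in> bas X (U \<inter> V)"
    using filter_Int[OF ult_filter] by (simp add: bas_def)
next
  fix p assume "p \<in> bas X (U \<inter> V)"
  then have p: "RO_ultrafilter X p" "U \<inter> V \<in> p" by (auto simp: bas_def)
  then have "U \<in> p" "V \<in> p" using filter_up[OF ult_filter[OF p(1)] p(2)] UR VR by auto
  then show "p \<in> bas X U \<inter> bas X V" using p by (simp add: bas_def)
qed

lemma open_basis:
  assumes "openin (StoneRO X) S" "p \<in> S"
  shows "\<exists>U\<in>RO X. p \<in> bas X U \<and> bas X U \<subseteq> S"
proof -
  have "generate_topology_on {bas X U | U. U \<in> RO X} S"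
    using assms(1) unfolding Stone_eq by (rule openin_topology_generated_by)
  then show ?thesis using assms(2)
  proof (induction arbitrary: p)
    case Empty then show ?case by simp
  next
    case (Int a b)
    then obtain U V where UV: "U \<in> RO X" "p \<in> bas X U" "bas X U \<subseteq> a"
        "V \<in> RO X" "p \<in> bas X V" "bas X V \<subseteq> b" by (meson IntD1 IntD2)
    then have "p \<in> bas X (U \<inter> V)" "bas X (U \<inter> V) \<subseteq> a \<inter> b" using bas_Int[of U X V] by auto
    then show ?case using RO_Int UV by blast
  next
    case (UN K)
    then obtain k where "k \<in> K" "p \<in> k" by blast
    then show ?case using UN by blast
  next
    case (Basis s)
    then show ?case by auto
  qed
qed

lemma Stone_Hausdorff: "Hausdorff_space (StoneRO X)"
proof -
  have *: "\<exists>U V. openin (StoneRO X) U \<and> openin (StoneRO X) V \<and> p \<in> U \<and> q \<in> V \<and> disjnt U V"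
    if p: "RO_ultrafilter X p" and q: "RO_ultrafilter X q" and A: "A \<in> p" and nA: "A \<notin> q" for p q A
  proof -
    have AR: "A \<in> RO X" using ult_R[OF p A] .
    obtain W where W: "W \<in> q" "W \<inter> A = {}" using ult_prime[OF q AR nA] by blast
    have WR: "W \<in> RO X" using ult_R[OF q W(1)] .
    have "disjnt (bas X A) (bas X W)"
    proof -
      { fix r assume "r \<in> bas X A" "r \<in> bas X W"
        then have "RO_ultrafilter X r" "A \<in> r" "W \<in> r" by (auto simp: bas_def)
        then have "A \<inter> W \<in> r" using filter_Int[OF ult_filter] by blast
        then have False using W(2) filter_ne[OF ult_filter[OF \<open>RO_ultrafilter X r\<close>]] by (simp add: Int_commute)
      }
      then show ?thesis by (auto simp: disjnt_def)
    qed
    then show ?thesis using open_bas[OF AR] open_bas[OF WR] p q A W(1)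
      by (intro exI[of _ "bas X A"] exI[of _ "bas X W"]) (auto simp: bas_def)
  qed
  show ?thesis unfolding Hausdorff_space_def topspace_Stone
  proof (intro allI impI)
    fix p q assume pq: "p \<in> Collect (RO_ultrafilter X) \<and> q \<in> Collect (RO_ultrafilter X) \<and> p \<noteq> q"
    then have p: "p \<in> {p. RO_ultrafilter X p}" and q: "q \<in> {p. RO_ultrafilter X p}" and ne: "p \<noteq> q" by auto
    have pu: "RO_ultrafilter X p" and qu: "RO_ultrafilter X q" using p q by auto
    show "\<exists>U V. openin (StoneRO X) U \<and> openin (StoneRO X) V \<and> p \<in> U \<and> q \<in> V \<and> disjnt U V"
    proof (cases "p \<subseteq> q")
      case True
      then have "q = p" using pu ult_filter[OF qu] by (simp add: RO_ultrafilter_def)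
      then show ?thesis using ne by simp
    next
      case False
      then obtain A where "A \<in> p" "A \<notin> q" by blast
      then show ?thesis using *[OF pu qu] by blast
    qed
  qed
qed

lemma Stone_cont:
  assumes hk: "homeomorphic_maps X X h k"
  shows "continuous_map (StoneRO X) (StoneRO X) (img h)"
proof -
  have "continuous_map (StoneRO X) (topology_generated_by {bas X U | U. U \<in> RO X}) (img h)"
  proof (rule continuous_on_generated_topo)
    fix B assume "B \<in> {bas X U | U. U \<in> RO X}"
    then obtain U where U: "U \<in> RO X" "B = bas X U" by blast
    have "img h -` B \<inter> topspace (StoneRO X) = bas X (k ` U)"
    proof (rule equalityI; rule subsetI)
      fix p assume "p \<in> img h -` B \<inter> topspace (StoneRO X)"
      then have p: "RO_ultrafilter X p" "U \<in> img h p" using U by (auto simp: topspace_Stone bas_def)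
      have "p \<subseteq> RO X" using p(1) ult_R by blast
      then have "k ` U \<in> p" using mem_img[OF hk _ RO_subset[OF U(1)]] p(2) by blast
      then show "p \<in> bas X (k ` U)" using p by (simp add: bas_def)
    next
      fix p assume "p \<in> bas X (k ` U)"
      then have p: "RO_ultrafilter X p" "k ` U \<in> p" by (auto simp: bas_def)
      have "p \<subseteq> RO X" using p(1) ult_R by blast
      then have "U \<in> img h p" using mem_img[OF hk _ RO_subset[OF U(1)]] p(2) by blast
      then show "p \<in> img h -` B \<inter> topspace (StoneRO X)"
        using U ult_img[OF hk p(1)] p(1) by (simp add: bas_def topspace_Stone)
    qed
    moreover have "k ` U \<in> RO X" using RO_image[OF hm_right[OF hk] U(1)] .
    ultimately show "openin (StoneRO X) (img h -` B \<inter> topspace (StoneRO X))"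
      using open_bas by metis
  next
    show "img h ` topspace (StoneRO X) \<subseteq> \<Union> {bas X U | U. U \<in> RO X}"
      unfolding Union_bas topspace_Stone using ult_img[OF hk] by blast
  qed
  then show ?thesis by (simp only: Stone_eq[symmetric])
qed



lemma Stone_compact: "compact_space (StoneRO X)"
  unfolding compact_space_alt
proof (intro allI impI)
  fix \<U> assume H: "(\<forall>U\<in>\<U>. openin (StoneRO X) U) \<and> topspace (StoneRO X) \<subseteq> \<Union>\<U>"
  show "\<exists>\<F>. finite \<F> \<and> \<F> \<subseteq> \<U> \<and> topspace (StoneRO X) \<subseteq> \<Union>\<F>"
  proof (rule ccontr)
    assume nofin: "\<not> (\<exists>\<F>. finite \<F> \<and> \<F> \<subseteq> \<U> \<and> topspace (StoneRO X) \<subseteq> \<Union>\<F>)"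
    define \<C> where "\<C> = {U \<in> RO X. \<exists>W\<in>\<U>. bas X U \<subseteq> W}"
    have avoid: "\<exists>q. RO_ultrafilter X q \<and> (\<forall>U\<in>C. U \<notin> q)" if C: "finite C" "C \<subseteq> \<C>" for C
    proof (rule ccontr)
      assume "\<not> (\<exists>q. RO_ultrafilter X q \<and> (\<forall>U\<in>C. U \<notin> q))"
      then have cov: "\<And>q. RO_ultrafilter X q \<Longrightarrow> \<exists>U\<in>C. U \<in> q" by blast
      have "\<forall>U\<in>C. \<exists>W. W \<in> \<U> \<and> bas X U \<subseteq> W" using C(2) \<C>_def by auto
      then obtain Of where Of: "\<forall>U\<in>C. Of U \<in> \<U> \<and> bas X U \<subseteq> Of U" by metis
      have "finite (Of ` C)" "Of ` C \<subseteq> \<U>" using C(1) Of by auto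
      moreover have "topspace (StoneRO X) \<subseteq> \<Union>(Of ` C)"
      proof
        fix q assume "q \<in> topspace (StoneRO X)"
        then have q: "RO_ultrafilter X q" by (simp add: topspace_Stone)
        then obtain U where U: "U \<in> C" "U \<in> q" using cov by blast
        then have "q \<in> bas X U" using q by (simp add: bas_def)
        then show "q \<in> \<Union>(Of ` C)" using Of U(1) by blast
      qed
      ultimately show False using nofin by blast
    qed
    define F where "F = {V \<in> RO X. \<exists>C. finite C \<and> C \<subseteq> \<C> \<and>
                      (\<forall>q. RO_ultrafilter X q \<and> (\<forall>U\<in>C. U \<notin> q) \<longrightarrow> V \<in> q)}"
    have Ff: "RO_filter X F"
      unfolding RO_filter_def
    proof (intro conjI ballI allI impI)
      show "F \<subseteq> RO X" by (auto simp: F_def)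
      show "topspace X \<in> F" unfolding F_def using RO_topspace ult_top
        by (intro CollectI conjI exI[of _ "{}"]) auto
      show "{} \<notin> F"
      proof
        assume "{} \<in> F"
        then obtain C where C: "finite C" "C \<subseteq> \<C>"
          "\<forall>q. RO_ultrafilter X q \<and> (\<forall>U\<in>C. U \<notin> q) \<longrightarrow> {} \<in> q" by (auto simp: F_def)
        obtain q where q: "RO_ultrafilter X q" "\<forall>U\<in>C. U \<notin> q" using avoid[OF C(1,2)] by blast
        then have "{} \<in> q" using C(3) by blast
        then show False using filter_ne[OF ult_filter[OF q(1)]] by blast
      qed
    next
      fix A B assume "A \<in> F" "B \<in> F"
      then obtain C1 C2 where C: "finite C1" "C1 \<subseteq> \<C>" "\<forall>q. RO_ultrafilter X q \<and> (\<forall>U\<in>C1. U \<notin> q) \<longrightarrow> A \<in> q"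
          "finite C2" "C2 \<subseteq> \<C>" "\<forall>q. RO_ultrafilter X q \<and> (\<forall>U\<in>C2. U \<notin> q) \<longrightarrow> B \<in> q"
        and AB: "A \<in> RO X" "B \<in> RO X"
        unfolding F_def by blast
      have "\<forall>q. RO_ultrafilter X q \<and> (\<forall>U\<in>C1 \<union> C2. U \<notin> q) \<longrightarrow> A \<inter> B \<in> q"
        using C filter_Int[OF ult_filter] by blast
      then show "A \<inter> B \<in> F" unfolding F_def using C AB RO_Int
        by (intro CollectI conjI exI[of _ "C1 \<union> C2"]) auto
    next
      fix A B assume "A \<in> F" "B \<in> RO X" "A \<subseteq> B"
      then obtain C where C: "finite C" "C \<subseteq> \<C>" "\<forall>q. RO_ultrafilter X q \<and> (\<forall>U\<in>C. U \<notin> q) \<longrightarrow> A \<in> q"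
        unfolding F_def by blast
      have "\<forall>q. RO_ultrafilter X q \<and> (\<forall>U\<in>C. U \<notin> q) \<longrightarrow> B \<in> q"
        using C(3) filter_up[OF ult_filter] \<open>B \<in> RO X\<close> \<open>A \<subseteq> B\<close> by blast
      then show "B \<in> F" unfolding F_def using C \<open>B \<in> RO X\<close>
        by (intro CollectI conjI exI[of _ C]) auto
    qed
    obtain q where q: "RO_ultrafilter X q" "F \<subseteq> q" using ult_exists[OF Ff] by blast
    have nq: "U \<notin> q" if UC: "U \<in> \<C>" for U
    proof
      assume Uq: "U \<in> q"
      have UR: "U \<in> RO X" using UC \<C>_def by auto
      let ?N = "X interior_of (topspace X - U)"
      have "?N \<in> RO X" using UR by (intro RO_int_closed) (auto simp: RO_open)
      moreover have "\<forall>r. RO_ultrafilter X r \<and> (\<forall>V\<in>{U}. V \<notin> r) \<longrightarrow> ?N \<in> r"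
        using ult_compl UR by blast
      ultimately have "?N \<in> F" unfolding F_def using UC
        by (intro CollectI conjI exI[of _ "{U}"]) auto
      then have "?N \<in> q" using q by blast
      then have "U \<inter> ?N \<in> q" using filter_Int[OF ult_filter[OF q(1)] Uq] by blast
      moreover have "?N \<subseteq> topspace X - U" by (rule interior_of_subset)
      then have "U \<inter> ?N = {}" by blast
      ultimately show False using filter_ne[OF ult_filter[OF q(1)]] by metis
    qed
    have "q \<in> topspace (StoneRO X)" using q by (simp add: topspace_Stone)
    then obtain W where W: "W \<in> \<U>" "q \<in> W" using H by blast
    then obtain U where U: "U \<in> RO X" "q \<in> bas X U" "bas X U \<subseteq> W" using open_basis H by blast
    then have "U \<in> \<C>" "U \<in> q" using W by (auto simp: \<C>_def bas_def)
    then show False using nq by blast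
  qed
qed

lemma act_hm:
  assumes "G_flow G X act" "g \<in> carrier G"
  shows "homeomorphic_maps X X (act g) (act (inv\<^bsub>G\<^esub> g))"
proof -
  have grp: "group G" using assms by (simp add: G_flow_def)
  have ig: "inv\<^bsub>G\<^esub> g \<in> carrier G" using grp assms(2) by simp
  show ?thesis unfolding homeomorphic_maps_def
  proof (intro conjI ballI)
    show "continuous_map X X (act g)" "continuous_map X X (act (inv\<^bsub>G\<^esub> g))"
      using assms ig by (auto simp: G_flow_def)
  next
    fix x assume x: "x \<in> topspace X"
    have "act (inv\<^bsub>G\<^esub> g) (act g x) = act (inv\<^bsub>G\<^esub> g \<otimes>\<^bsub>G\<^esub> g) x"
      using assms ig x by (simp add: G_flow_def)
    also have "\<dots> = x" using grp assms x by (simp add: G_flow_def group.l_inv)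
    finally show "act (inv\<^bsub>G\<^esub> g) (act g x) = x" .
  next
    fix x assume x: "x \<in> topspace X"
    have "act g (act (inv\<^bsub>G\<^esub> g) x) = act (g \<otimes>\<^bsub>G\<^esub> inv\<^bsub>G\<^esub> g) x"
      using assms ig x by (simp add: G_flow_def)
    also have "\<dots> = x" using grp assms x by (simp add: G_flow_def group.r_inv)
    finally show "act g (act (inv\<^bsub>G\<^esub> g) x) = x" .
  qed
qed

lemma act_one_img: "G_flow G X act \<Longrightarrow> U \<subseteq> topspace X \<Longrightarrow> act \<one>\<^bsub>G\<^esub> ` U = U"
proof -
  assume a: "G_flow G X act" "U \<subseteq> topspace X"
  have "act \<one>\<^bsub>G\<^esub> ` U = (\<lambda>x. x) ` U"
    by (rule image_cong) (use a in \<open>auto simp: G_flow_def subset_eq\<close>)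
  then show ?thesis by simp
qed

lemma act_mult_img: "G_flow G X act \<Longrightarrow> g \<in> carrier G \<Longrightarrow> h \<in> carrier G \<Longrightarrow> U \<subseteq> topspace X
   \<Longrightarrow> act (g \<otimes>\<^bsub>G\<^esub> h) ` U = act g ` act h ` U"
proof -
  assume a: "G_flow G X act" "g \<in> carrier G" "h \<in> carrier G" "U \<subseteq> topspace X"
  have "act g ` act h ` U = (\<lambda>x. act g (act h x)) ` U" by (simp add: image_image)
  also have "\<dots> = act (g \<otimes>\<^bsub>G\<^esub> h) ` U"
    by (rule image_cong) (use a in \<open>auto simp: G_flow_def subset_eq\<close>)
  finally show ?thesis by simp
qed

lemma Stone_act_eq: "StoneRO_act act g = img (act g)"
  by (simp add: StoneRO_act_def fun_eq_iff)

lemma Stone_flow: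
  assumes fl: "G_flow G X act"
  shows "G_flow G (StoneRO X) (StoneRO_act act)"
  unfolding G_flow_def Stone_act_eq
proof (intro conjI ballI)
  show "group G" using fl by (simp add: G_flow_def)
  show "compact_space (StoneRO X)" by (rule Stone_compact)
  show "Hausdorff_space (StoneRO X)" by (rule Stone_Hausdorff)
next
  fix g assume "g \<in> carrier G"
  then show "continuous_map (StoneRO X) (StoneRO X) (img (act g))"
    using Stone_cont act_hm[OF fl] by blast
next
  fix p assume "p \<in> topspace (StoneRO X)"
  then have pR: "p \<subseteq> RO X" using ult_R by (auto simp: topspace_Stone)
  show "img (act \<one>\<^bsub>G\<^esub>) p = p"
  proof -
    have "img (act \<one>\<^bsub>G\<^esub>) p = (\<lambda>U. U) ` p"
    proof (rule image_cong)
      fix U assume "U \<in> p"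
      then have "U \<subseteq> topspace X" using pR RO_subset by blast
      then show "act \<one>\<^bsub>G\<^esub> ` U = U" using act_one_img[OF fl] by blast
    qed simp
    then show ?thesis by simp
  qed
next
  fix g h p assume gh: "g \<in> carrier G" "h \<in> carrier G" and "p \<in> topspace (StoneRO X)"
  then have pR: "p \<subseteq> RO X" using ult_R by (auto simp: topspace_Stone)
  have "img (act g) (img (act h) p) = (\<lambda>U. act g ` act h ` U) ` p" by (simp add: image_image)
  also have "\<dots> = img (act (g \<otimes>\<^bsub>G\<^esub> h)) p"
  proof (rule image_cong)
    fix U assume "U \<in> p"
    then have "U \<subseteq> topspace X" using pR RO_subset by blast
    then show "act g ` act h ` U = act (g \<otimes>\<^bsub>G\<^esub> h) ` U" using act_mult_img[OF fl gh] by simp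
  qed simp
  finally show "img (act (g \<otimes>\<^bsub>G\<^esub> h)) p = img (act g) (img (act h) p)" by simp
qed



lemma sep_intcl:
  assumes hk: "homeomorphic_maps X X h k" and A: "openin X A" and dis: "A \<inter> h ` A = {}"
  shows "X interior_of (X closure_of A) \<inter> h ` (X interior_of (X closure_of A)) = {}"
proof -
  have As: "A \<subseteq> topspace X" using A openin_subset by blast
  have "h ` (X interior_of (X closure_of A)) = X interior_of (X closure_of (h ` A))"
    using homeo_intcl[OF hm_left[OF hk] As] by simp
  moreover have "openin X (h ` A)" using homeomorphic_map_openness[OF hm_left[OF hk] As] A by simp
  ultimately show ?thesis using intcl_disjoint[OF A _ dis] by simp
qed

lemma density:
  assumes hk: "homeomorphic_maps X X h k" and Hs: "Hausdorff_space X"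
    and nfix: "X interior_of {x \<in> topspace X. h x = x} = {}"
    and U: "U \<in> RO X" "U \<noteq> {}"
  shows "\<exists>T\<in>RO X. T \<noteq> {} \<and> T \<subseteq> U \<and> T \<inter> h ` T = {}"
proof -
  have Uo: "openin X U" using RO_open[OF U(1)] .
  have "\<not> U \<subseteq> {x \<in> topspace X. h x = x}"
  proof
    assume "U \<subseteq> {x \<in> topspace X. h x = x}"
    then have "U \<subseteq> X interior_of {x \<in> topspace X. h x = x}" using Uo by (rule interior_of_maximal)
    then show False using nfix U(2) by blast
  qed
  then obtain x where x: "x \<in> U" "h x \<noteq> x" using RO_subset[OF U(1)] by blast
  have xt: "x \<in> topspace X" using x RO_subset[OF U(1)] by blast
  have cont: "continuous_map X X h" using hk by (simp add: homeomorphic_maps_def)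
  have hxt: "h x \<in> topspace X" using continuous_map_image_subset_topspace[OF cont] xt by blast
  obtain O1 O2 where O: "openin X O1" "openin X O2" "x \<in> O1" "h x \<in> O2" "disjnt O1 O2"
    using Hs xt hxt x(2) unfolding Hausdorff_space_def by metis
  define Q where "Q = U \<inter> O1 \<inter> {y \<in> topspace X. h y \<in> O2}"
  have Qo: "openin X Q" unfolding Q_def
    using Uo O(1) openin_continuous_map_preimage[OF cont O(2)] by blast
  have xQ: "x \<in> Q" using x xt O by (simp add: Q_def)
  have Qdis: "Q \<inter> h ` Q = {}" using O(5) by (auto simp: Q_def disjnt_def)
  define T where "T = X interior_of (X closure_of Q)"
  have "T \<in> RO X" unfolding T_def by (rule RO_intcl)
  moreover have "T \<noteq> {}" using open_sub_intcl[OF Qo] xQ T_def by blast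
  moreover have "T \<subseteq> U"
  proof -
    have "T \<subseteq> X interior_of (X closure_of U)" unfolding T_def
      by (intro interior_of_mono closure_of_mono) (auto simp: Q_def)
    then show ?thesis using U(1) by (simp add: RO_def regular_open_def)
  qed
  moreover have "T \<inter> h ` T = {}" unfolding T_def by (rule sep_intcl[OF hk Qo Qdis])
  ultimately show ?thesis by blast
qed

lemma maximal_sep:
  assumes hk: "homeomorphic_maps X X h k"
  shows "\<exists>V\<in>{V \<in> RO X. V \<inter> h ` V = {}}. \<forall>V'\<in>{V \<in> RO X. V \<inter> h ` V = {}}. V \<subseteq> V' \<longrightarrow> V' = V"
proof (rule subset_Zorn)
  fix C assume C: "subset.chain {V \<in> RO X. V \<inter> h ` V = {}} C"
  have CA: "C \<subseteq> {V \<in> RO X. V \<inter> h ` V = {}}" using C by (simp add: subset.chain_def)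
  have Co: "openin X (\<Union>C)" using CA RO_open by (intro openin_Union) blast
  have Cd: "\<Union>C \<inter> h ` \<Union>C = {}"
  proof (rule ccontr)
    assume "\<Union>C \<inter> h ` \<Union>C \<noteq> {}"
    then obtain z y V1 V2 where z: "V1 \<in> C" "z \<in> V1" "V2 \<in> C" "y \<in> V2" "z = h y" by blast
    have "V1 \<subseteq> V2 \<or> V2 \<subseteq> V1" using C z by (auto simp: subset.chain_def)
    then show False
    proof
      assume "V1 \<subseteq> V2"
      then have "z \<in> V2 \<inter> h ` V2" using z by blast
      then show False using CA z(3) by blast
    next
      assume "V2 \<subseteq> V1"
      then have "z \<in> V1 \<inter> h ` V1" using z by blast
      then show False using CA z(1) by blast
    qed
  qed
  let ?U0 = "X interior_of (X closure_of (\<Union>C))"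
  have "?U0 \<in> {V \<in> RO X. V \<inter> h ` V = {}}"
    using RO_intcl sep_intcl[OF hk Co Cd] by blast
  moreover have "\<forall>V\<in>C. V \<subseteq> ?U0" using open_sub_intcl[OF Co] by blast
  ultimately show "\<exists>U\<in>{V \<in> RO X. V \<inter> h ` V = {}}. \<forall>V\<in>C. V \<subseteq> U" by blast
qed

lemma core:
  assumes hk: "homeomorphic_maps X X h k" and Hs: "Hausdorff_space X"
    and nfix: "\<And>U. U \<in> RO X \<Longrightarrow> U \<noteq> {} \<Longrightarrow> \<exists>T\<in>RO X. T \<noteq> {} \<and> T \<subseteq> U \<and> T \<inter> h ` T = {}"
  shows "\<exists>V\<in>RO X. V \<inter> h ` V = {} \<and>
           (\<forall>q. RO_ultrafilter X q \<longrightarrow> V \<in> q \<or> h ` V \<in> q \<or> k ` V \<in> q)"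
proof -
  from maximal_sep[OF hk] obtain V where V1: "V \<in> {V \<in> RO X. V \<inter> h ` V = {}}"
    and V2: "\<forall>V'\<in>{V \<in> RO X. V \<inter> h ` V = {}}. V \<subseteq> V' \<longrightarrow> V' = V" by (rule bexE)
  have V: "V \<in> RO X" "V \<inter> h ` V = {}" using V1 by auto
  have Vmax: "\<And>V'. V' \<in> RO X \<Longrightarrow> V' \<inter> h ` V' = {} \<Longrightarrow> V \<subseteq> V' \<Longrightarrow> V' = V"
    using V2 by blast
  have Vs: "V \<subseteq> topspace X" using RO_subset[OF V(1)] .
  have Vo: "openin X V" using RO_open[OF V(1)] .
  define W where "W = V \<union> h ` V \<union> k ` V"
  have hVo: "openin X (h ` V)" using homeomorphic_map_openness[OF hm_left[OF hk] Vs] Vo by simp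
  have kVo: "openin X (k ` V)" using homeomorphic_map_openness[OF hm_right[OF hk] Vs] Vo by simp
  have Wo: "openin X W" unfolding W_def using Vo hVo kVo by blast
  have kh: "\<And>y. y \<in> topspace X \<Longrightarrow> k (h y) = y" using hk by (simp add: homeomorphic_maps_def)
  have dense: "X closure_of W = topspace X"
  proof (rule ccontr)
    assume ne: "X closure_of W \<noteq> topspace X"
    define N where "N = topspace X - X closure_of W"
    have No: "openin X N" unfolding N_def by (intro openin_diff) simp_all
    have Nne: "N \<noteq> {}" using ne closure_of_subset_topspace[of X W] N_def by blast
    define T0 where "T0 = X interior_of (X closure_of N)"
    have T0R: "T0 \<in> RO X" unfolding T0_def by (rule RO_intcl)
    have T0ne: "T0 \<noteq> {}" using open_sub_intcl[OF No] Nne T0_def by blast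
    have "W \<inter> N = {}" using closure_of_subset[of W X] openin_subset[OF Wo] N_def by blast
    then have "W \<inter> X closure_of N = {}" using openin_Int_closure_of_eq_empty[OF Wo] by simp
    moreover have "T0 \<subseteq> X closure_of N" unfolding T0_def by (rule interior_of_subset)
    ultimately have T0W: "T0 \<inter> W = {}" by blast
    obtain T where T: "T \<in> RO X" "T \<noteq> {}" "T \<subseteq> T0" "T \<inter> h ` T = {}" using nfix[OF T0R T0ne] by blast
    have TW: "T \<inter> W = {}" using T0W T(3) by blast
    have Ts: "T \<subseteq> topspace X" using RO_subset[OF T(1)] .
    have VTo: "openin X (V \<union> T)" using Vo RO_open[OF T(1)] by blast
    have VTd: "(V \<union> T) \<inter> h ` (V \<union> T) = {}"
    proof (rule ccontr)
      assume "(V \<union> T) \<inter> h ` (V \<union> T) \<noteq> {}"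
      then obtain z y where zy: "z \<in> V \<union> T" "y \<in> V \<union> T" "z = h y" by blast
      have yt: "y \<in> topspace X" using zy(2) Vs Ts by blast
      show False
      proof (cases "z \<in> V")
        case True
        show False
        proof (cases "y \<in> V")
          case True then show False using \<open>z \<in> V\<close> zy(3) V(2) by blast
        next
          case False
          then have "y \<in> T" using zy(2) by blast
          moreover have "y = k z" using kh[OF yt] zy(3) by simp
          then have "y \<in> W" using \<open>z \<in> V\<close> W_def by blast
          ultimately show False using TW by blast
        qed
      next
        case False
        then have zT: "z \<in> T" using zy(1) by blast
        show False
        proof (cases "y \<in> V")
          case True
          then have "z \<in> W" using zy(3) W_def by blast
          then show False using zT TW by blast
        next
          case False
          then have "y \<in> T" using zy(2) by blast
          then show False using zT zy(3) T(4) by blast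
        qed
      qed
    qed
    let ?V' = "X interior_of (X closure_of (V \<union> T))"
    have "?V' \<in> RO X" by (rule RO_intcl)
    moreover have "?V' \<inter> h ` ?V' = {}" by (rule sep_intcl[OF hk VTo VTd])
    moreover have VV': "V \<union> T \<subseteq> ?V'" using open_sub_intcl[OF VTo] .
    ultimately have "?V' = V" using Vmax by blast
    then have "T \<subseteq> W" using VV' W_def by blast
    then show False using TW T(2) by blast
  qed
  have "\<forall>q. RO_ultrafilter X q \<longrightarrow> V \<in> q \<or> h ` V \<in> q \<or> k ` V \<in> q"
  proof (intro allI impI)
    fix q assume q: "RO_ultrafilter X q"
    show "V \<in> q \<or> h ` V \<in> q \<or> k ` V \<in> q"
    proof (rule ccontr)
      assume "\<not> (V \<in> q \<or> h ` V \<in> q \<or> k ` V \<in> q)"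
      then have n: "V \<notin> q" "h ` V \<notin> q" "k ` V \<notin> q" by auto
      obtain W1 where W1: "W1 \<in> q" "W1 \<inter> V = {}" using ult_prime[OF q V(1) n(1)] by blast
      obtain W2 where W2: "W2 \<in> q" "W2 \<inter> h ` V = {}"
        using ult_prime[OF q RO_image[OF hm_left[OF hk] V(1)] n(2)] by blast
      obtain W3 where W3: "W3 \<in> q" "W3 \<inter> k ` V = {}"
        using ult_prime[OF q RO_image[OF hm_right[OF hk] V(1)] n(3)] by blast
      have qf: "RO_filter X q" using ult_filter[OF q] .
      have Mq: "W1 \<inter> W2 \<inter> W3 \<in> q" using filter_Int[OF qf filter_Int[OF qf W1(1) W2(1)] W3(1)] .
      have Mo: "openin X (W1 \<inter> W2 \<inter> W3)" using Mq ult_R[OF q] RO_open by blast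
      have "(W1 \<inter> W2 \<inter> W3) \<inter> W = {}" using W1 W2 W3 W_def by blast
      then have "(W1 \<inter> W2 \<inter> W3) \<inter> X closure_of W = {}" using openin_Int_closure_of_eq_empty[OF Mo] by simp
      then have "W1 \<inter> W2 \<inter> W3 = {}" using dense openin_subset[OF Mo] by blast
      then show False using Mq filter_ne[OF qf] by metis
    qed
  qed
  then show ?thesis using V by blast
qed



definition wit :: "('g, 'b) monoid_scheme \<Rightarrow> 'x topology \<Rightarrow> ('g \<Rightarrow> 'x \<Rightarrow> 'x) \<Rightarrow> 'g \<Rightarrow> 'x set \<Rightarrow> bool" where
  "wit G X act g V \<longleftrightarrow> V \<in> RO X \<and>
     (\<forall>q. RO_ultrafilter X q \<longrightarrow> (\<exists>A\<in>{V, act g ` V, act (inv\<^bsub>G\<^esub> g) ` V}. A \<in> q)) \<and>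
     (\<forall>A\<in>{V, act g ` V, act (inv\<^bsub>G\<^esub> g) ` V}. A \<inter> act g ` A = {})"

lemma witness:
  assumes fl: "G_flow G X act" and ef: "essentially_free G X act"
    and g: "g \<in> carrier G" "g \<noteq> \<one>\<^bsub>G\<^esub>"
  shows "\<exists>V. wit G X act g V"
proof -
  let ?h = "act g" and ?k = "act (inv\<^bsub>G\<^esub> g)"
  have hk: "homeomorphic_maps X X ?h ?k" using act_hm[OF fl g(1)] .
  have Hs: "Hausdorff_space X" using fl by (simp add: G_flow_def)
  have nfix: "X interior_of {x \<in> topspace X. ?h x = x} = {}" using ef g by (simp add: essentially_free_def)
  obtain V where V: "V \<in> RO X" "V \<inter> ?h ` V = {}"
      "\<forall>q. RO_ultrafilter X q \<longrightarrow> V \<in> q \<or> ?h ` V \<in> q \<or> ?k ` V \<in> q"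
    using core[OF hk Hs density[OF hk Hs nfix]] by blast
  have Vs: "V \<subseteq> topspace X" using RO_subset[OF V(1)] .
  have hVs: "?h ` V \<subseteq> topspace X" using hm_sub[OF hk Vs] .
  have d2: "?h ` V \<inter> ?h ` ?h ` V = {}"
    using hm_img_Int[OF hk Vs hVs] V(2) by simp
  have kVs: "?k ` V \<subseteq> topspace X" using hm_sub[OF hm_sym[OF hk] Vs] .
  have "?h ` ?k ` V = V" using hm_kh[OF hm_sym[OF hk] Vs] .
  moreover have "?k ` ?h ` V = V" using hm_kh[OF hk Vs] .
  moreover have "?k ` V \<inter> ?k ` ?h ` V = ?k ` (V \<inter> ?h ` V)"
    using hm_img_Int[OF hm_sym[OF hk] Vs hVs] by simp
  ultimately have d3: "?k ` V \<inter> ?h ` ?k ` V = {}" using V(2) by simp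
  have "wit G X act g V" unfolding wit_def
  proof (intro conjI allI impI)
    show "V \<in> RO X" by (rule V(1))
  next
    fix q assume "RO_ultrafilter X q"
    then have "V \<in> q \<or> ?h ` V \<in> q \<or> ?k ` V \<in> q" using V(3) by blast
    then show "\<exists>A\<in>{V, ?h ` V, ?k ` V}. A \<in> q" by blast
  next
    show "\<forall>A\<in>{V, ?h ` V, ?k ` V}. A \<inter> ?h ` A = {}" using V(2) d2 d3 by simp
  qed
  then show ?thesis by blast
qed

lemma wit_contra:
  assumes w: "wit G X act g V" and q: "RO_ultrafilter X q"
    and inv: "\<And>A. A \<in> {V, act g ` V, act (inv\<^bsub>G\<^esub> g) ` V} \<Longrightarrow> A \<in> q \<Longrightarrow> act g ` A \<in> q"
  shows False
proof -
  have "\<forall>q. RO_ultrafilter X q \<longrightarrow> (\<exists>A\<in>{V, act g ` V, act (inv\<^bsub>G\<^esub> g) ` V}. A \<in> q)"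
    using w unfolding wit_def by (rule conjunct1[OF conjunct2])
  then have "\<exists>A\<in>{V, act g ` V, act (inv\<^bsub>G\<^esub> g) ` V}. A \<in> q" using q by simp
  then obtain A where A: "A \<in> {V, act g ` V, act (inv\<^bsub>G\<^esub> g) ` V}" "A \<in> q" by (rule bexE)
  have "act g ` A \<in> q" using inv[OF A] .
  then have "A \<inter> act g ` A \<in> q" using filter_Int[OF ult_filter[OF q] A(2)] by blast
  moreover have "\<forall>A\<in>{V, act g ` V, act (inv\<^bsub>G\<^esub> g) ` V}. A \<inter> act g ` A = {}"
    using w unfolding wit_def by (rule conjunct2[OF conjunct2])
  then have "A \<inter> act g ` A = {}" using A(1) by (rule bspec)
  ultimately show False using filter_ne[OF ult_filter[OF q]] by metis
qed

lemma Stone_free: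
  assumes fl: "G_flow G X act" and ef: "essentially_free G X act"
  shows "free_flow G (StoneRO X) (StoneRO_act act)"
  unfolding free_flow_def Stone_act_eq
proof (intro ballI impI)
  fix p g assume p: "p \<in> topspace (StoneRO X)" and g: "g \<in> carrier G" and fx: "img (act g) p = p"
  show "g = \<one>\<^bsub>G\<^esub>"
  proof (rule ccontr)
    assume "g \<noteq> \<one>\<^bsub>G\<^esub>"
    then obtain V where w: "wit G X act g V" using witness[OF fl ef g] by blast
    have pu: "RO_ultrafilter X p" using p by (simp add: topspace_Stone)
    show False
    proof (rule wit_contra[OF w pu])
      fix A assume "A \<in> p"
      then have "act g ` A \<in> img (act g) p" by blast
      then show "act g ` A \<in> p" using fx by simp
    qed
  qed
qed



lemma bas_compl:
  assumes B: "B \<in> RO X"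
  shows "{p \<in> topspace (StoneRO X). B \<notin> p} = bas X (X interior_of (topspace X - B))"
proof (rule equalityI; rule subsetI)
  fix p assume "p \<in> {p \<in> topspace (StoneRO X). B \<notin> p}"
  then have p: "RO_ultrafilter X p" "B \<notin> p" by (auto simp: topspace_Stone)
  then show "p \<in> bas X (X interior_of (topspace X - B))" using ult_compl[OF p(1) B p(2)] by (simp add: bas_def)
next
  fix p assume "p \<in> bas X (X interior_of (topspace X - B))"
  then have p: "RO_ultrafilter X p" "X interior_of (topspace X - B) \<in> p" by (auto simp: bas_def)
  have "B \<notin> p"
  proof
    assume "B \<in> p"
    then have "B \<inter> X interior_of (topspace X - B) \<in> p" using filter_Int[OF ult_filter[OF p(1)] _ p(2)] by blast
    moreover have "X interior_of (topspace X - B) \<subseteq> topspace X - B" by (rule interior_of_subset)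
    then have "B \<inter> X interior_of (topspace X - B) = {}" by blast
    ultimately show False using filter_ne[OF ult_filter[OF p(1)]] by metis
  qed
  then show "p \<in> {p \<in> topspace (StoneRO X). B \<notin> p}" using p(1) by (simp add: topspace_Stone)
qed

lemma indicator_cont:
  assumes B: "B \<in> RO X"
  shows "continuous_map (StoneRO X) euclidean (\<lambda>p. if B \<in> p then (1::real) else 0)"
  unfolding continuous_map_def
proof (intro conjI allI impI)
  show "(\<lambda>p. if B \<in> p then (1::real) else 0) \<in> topspace (StoneRO X) \<rightarrow> topspace euclidean" by simp
next
  fix U :: "real set" assume "openin euclidean U"
  have o1: "openin (StoneRO X) {p \<in> topspace (StoneRO X). B \<in> p}"
  proof -
    have "{p \<in> topspace (StoneRO X). B \<in> p} = bas X B" by (auto simp: topspace_Stone bas_def)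
    then show ?thesis using open_bas[OF B] by simp
  qed
  have o2: "openin (StoneRO X) {p \<in> topspace (StoneRO X). B \<notin> p}"
    unfolding bas_compl[OF B] using B by (intro open_bas RO_int_closed) (auto simp: RO_open)
  show "openin (StoneRO X) {x \<in> topspace (StoneRO X). (if B \<in> x then 1 else 0) \<in> U}"
  proof (cases "(1::real) \<in> U"; cases "(0::real) \<in> U")
    assume a: "(1::real) \<in> U" "(0::real) \<in> U"
    then have "{x \<in> topspace (StoneRO X). (if B \<in> x then 1 else 0) \<in> U} = topspace (StoneRO X)" using a by auto
    then show ?thesis by (metis openin_topspace)
  next
    assume a: "(1::real) \<in> U" "(0::real) \<notin> U"
    then have "{x \<in> topspace (StoneRO X). (if B \<in> x then 1 else 0) \<in> U} = {p \<in> topspace (StoneRO X). B \<in> p}" using a by auto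
    then show ?thesis using o1 by metis
  next
    assume a: "(1::real) \<notin> U" "(0::real) \<in> U"
    then have "{x \<in> topspace (StoneRO X). (if B \<in> x then 1 else 0) \<in> U} = {p \<in> topspace (StoneRO X). B \<notin> p}" using a by auto
    then show ?thesis using o2 by metis
  next
    assume a: "(1::real) \<notin> U" "(0::real) \<notin> U"
    then have "{x \<in> topspace (StoneRO X). (if B \<in> x then 1 else 0) \<in> U} = {}" using a by auto
    then show ?thesis by (metis openin_empty)
  qed
qed

lemma proj_cont: "continuous_map (euclidean :: (nat \<Rightarrow> real) topology) euclidean (\<lambda>v n. v (m n))"
proof -
  have "continuous_map (product_topology (\<lambda>i. euclidean) UNIV) (product_topology (\<lambda>i. euclidean) UNIV) (\<lambda>v n. (v::nat \<Rightarrow> real) (m n))"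
    unfolding continuous_map_componentwise_UNIV
    by (intro allI continuous_map_product_projection) simp
  then show ?thesis by (simp add: euclidean_product_topology)
qed

lemma comp_cont:
  assumes "\<And>n. continuous_map T euclidean (\<lambda>x. f x n :: real)"
  shows "continuous_map T (euclidean :: (nat \<Rightarrow> real) topology) f"
proof -
  have "continuous_map T (product_topology (\<lambda>i. euclidean) UNIV) f"
    unfolding continuous_map_componentwise_UNIV using assms by blast
  then show ?thesis by (simp add: euclidean_product_topology)
qed

locale fac =
  fixes G :: "('g, 'b) monoid_scheme" and X :: "'x topology" and act :: "'g \<Rightarrow> 'x \<Rightarrow> 'x"
  assumes fl: "G_flow G X act" and ef: "essentially_free G X act" and cG: "countable (carrier G)"
begin

definition Vw where "Vw g = (SOME V. wit G X act g V)"
definition BB where "BB = {act h ` Vw g | h g. h \<in> carrier G \<and> g \<in> carrier G \<and> g \<noteq> \<one>\<^bsub>G\<^esub>} \<union> {topspace X}"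
definition enum where "enum = from_nat_into BB"
definition fm :: "'x set set \<Rightarrow> 'x set set set" where "fm p = {p \<inter> BB}"
definition FF where "FF = fm ` {p. RO_ultrafilter X p}"
definition kap :: "'x set set set \<Rightarrow> nat \<Rightarrow> real" where "kap a = (\<lambda>n. if enum n \<in> \<Union>a then 1 else 0)"
definition ZZ where "ZZ = pullback_topology FF kap euclidean"
definition actZ where "actZ g a = {img (act g) (\<Union>a)}"

lemma grp: "group G" using fl by (simp add: G_flow_def)

lemma Vw: "g \<in> carrier G \<Longrightarrow> g \<noteq> \<one>\<^bsub>G\<^esub> \<Longrightarrow> wit G X act g (Vw g)"
  unfolding Vw_def using witness[OF fl ef] by (metis someI_ex)

lemma Vw_R: "g \<in> carrier G \<Longrightarrow> g \<noteq> \<one>\<^bsub>G\<^esub> \<Longrightarrow> Vw g \<in> RO X"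
  using Vw by (simp add: wit_def)

lemma BB_R: "BB \<subseteq> RO X"
proof
  fix B assume "B \<in> BB"
  then show "B \<in> RO X"
  proof (cases "B = topspace X")
    case False
    then obtain h g where "B = act h ` Vw g" "h \<in> carrier G" "g \<in> carrier G" "g \<noteq> \<one>\<^bsub>G\<^esub>"
      using \<open>B \<in> BB\<close> by (auto simp: BB_def)
    then show ?thesis using RO_image[OF hm_left[OF act_hm[OF fl]] Vw_R] by simp
  qed (simp add: RO_topspace)
qed

lemma BB_ne: "BB \<noteq> {}" by (simp add: BB_def)

lemma BB_count: "countable BB"
proof -
  have "{act h ` Vw g | h g. h \<in> carrier G \<and> g \<in> carrier G \<and> g \<noteq> \<one>\<^bsub>G\<^esub>}
        \<subseteq> (\<lambda>(h, g). act h ` Vw g) ` (carrier G \<times> carrier G)" by auto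
  moreover have "countable ((\<lambda>(h, g). act h ` Vw g) ` (carrier G \<times> carrier G))"
    using cG by (intro countable_image countable_SIGMA) auto
  ultimately have "countable {act h ` Vw g | h g. h \<in> carrier G \<and> g \<in> carrier G \<and> g \<noteq> \<one>\<^bsub>G\<^esub>}"
    by (rule countable_subset)
  then show ?thesis unfolding BB_def by simp
qed

lemma range_enum: "range enum = BB"
  unfolding enum_def using range_from_nat_into[OF BB_ne BB_count] .

lemma BB_inv: assumes g: "g \<in> carrier G" and B: "B \<in> BB" shows "act g ` B \<in> BB"
proof (cases "B = topspace X")
  case True
  then show ?thesis using hm_top[OF act_hm[OF fl g]] by (simp add: BB_def)
next
  case False
  then obtain h g' where hg: "B = act h ` Vw g'" "h \<in> carrier G" "g' \<in> carrier G" "g' \<noteq> \<one>\<^bsub>G\<^esub>"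
    using B by (auto simp: BB_def)
  have "act g ` B = act (g \<otimes>\<^bsub>G\<^esub> h) ` Vw g'"
    using act_mult_img[OF fl g hg(2) RO_subset[OF Vw_R[OF hg(3,4)]]] hg(1) by simp
  moreover have "g \<otimes>\<^bsub>G\<^esub> h \<in> carrier G" using grp g hg(2) by (simp add: group.is_monoid monoid.m_closed)
  ultimately show ?thesis using hg(3,4) unfolding BB_def by blast
qed

lemma Vw_BB: assumes g: "g \<in> carrier G" "g \<noteq> \<one>\<^bsub>G\<^esub>"
  shows "Vw g \<in> BB" "act g ` Vw g \<in> BB" "act (inv\<^bsub>G\<^esub> g) ` Vw g \<in> BB"
proof -
  have one: "\<one>\<^bsub>G\<^esub> \<in> carrier G" using grp by (simp add: group.is_monoid monoid.one_closed)
  have "act \<one>\<^bsub>G\<^esub> ` Vw g = Vw g" using act_one_img[OF fl RO_subset[OF Vw_R[OF g]]] .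
  moreover have "act \<one>\<^bsub>G\<^esub> ` Vw g \<in> BB" using one g unfolding BB_def by blast
  ultimately show "Vw g \<in> BB" by simp
  then show "act g ` Vw g \<in> BB" "act (inv\<^bsub>G\<^esub> g) ` Vw g \<in> BB"
    using BB_inv g grp by (auto simp: group.inv_closed)
qed

end



context fac
begin

lemma hk: "g \<in> carrier G \<Longrightarrow> homeomorphic_maps X X (act g) (act (inv\<^bsub>G\<^esub> g))"
  by (rule act_hm[OF fl])

lemma ginv: "g \<in> carrier G \<Longrightarrow> inv\<^bsub>G\<^esub> g \<in> carrier G"
  using grp by (simp add: group.inv_closed)

lemma pR: "RO_ultrafilter X p \<Longrightarrow> p \<subseteq> RO X"
  using ult_R by blast

lemma key:
  assumes p: "RO_ultrafilter X p" and g: "g \<in> carrier G"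
  shows "img (act g) (p \<inter> BB) = img (act g) p \<inter> BB"
proof (rule equalityI; rule subsetI)
  fix W assume "W \<in> img (act g) (p \<inter> BB)"
  then obtain U where U: "U \<in> p" "U \<in> BB" "W = act g ` U" by blast
  then show "W \<in> img (act g) p \<inter> BB" using BB_inv[OF g U(2)] by blast
next
  fix W assume W: "W \<in> img (act g) p \<inter> BB"
  then obtain U where U: "U \<in> p" "W = act g ` U" by blast
  have Us: "U \<subseteq> topspace X" using U(1) pR[OF p] RO_subset by blast
  have "U = act (inv\<^bsub>G\<^esub> g) ` W" using hm_kh[OF hk[OF g] Us] U(2) by simp
  then have "U \<in> BB" using BB_inv[OF ginv[OF g]] W by simp
  then show "W \<in> img (act g) (p \<inter> BB)" using U by blast
qed

lemma topZ: "topspace ZZ = FF"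
  unfolding ZZ_def topspace_pullback_topology by simp

lemma fm_in: "RO_ultrafilter X p \<Longrightarrow> fm p \<in> FF"
  by (simp add: FF_def)

lemma FF_cases: "a \<in> FF \<Longrightarrow> \<exists>p. RO_ultrafilter X p \<and> a = fm p"
  by (auto simp: FF_def)

lemma Un_fm: "\<Union>(fm p) = p \<inter> BB"
  by (simp add: fm_def)

lemma equiv: "RO_ultrafilter X p \<Longrightarrow> g \<in> carrier G \<Longrightarrow> fm (img (act g) p) = actZ g (fm p)"
  unfolding actZ_def Un_fm by (simp add: key fm_def)

lemma actZ_FF: assumes "a \<in> FF" "g \<in> carrier G" shows "actZ g a \<in> FF"
proof -
  obtain p where p: "RO_ultrafilter X p" "a = fm p" using FF_cases[OF assms(1)] by blast
  have "actZ g a = fm (img (act g) p)" using equiv[OF p(1) assms(2)] p(2) by simp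
  then show ?thesis using fm_in[OF ult_img[OF hk[OF assms(2)] p(1)]] by simp
qed

lemma enum_BB: "enum n \<in> BB" using range_enum by blast

lemma kap_fm: "kap (fm p) n = (if enum n \<in> p then 1 else 0)"
  unfolding kap_def Un_fm using enum_BB by simp

lemma f_cont: "continuous_map (StoneRO X) ZZ fm"
  unfolding ZZ_def
proof (rule continuous_map_pullback')
  show "continuous_map (StoneRO X) euclidean (kap \<circ> fm)"
  proof (rule comp_cont)
    fix n
    have "(\<lambda>x. (kap \<circ> fm) x n) = (\<lambda>p. if enum n \<in> p then 1 else 0)"
      by (simp add: kap_fm fun_eq_iff)
    then show "continuous_map (StoneRO X) euclidean (\<lambda>x. (kap \<circ> fm) x n)"
      using indicator_cont[of "enum n" X] enum_BB BB_R by auto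
  qed
  show "topspace (StoneRO X) \<subseteq> fm -` FF"
    using fm_in by (auto simp: topspace_Stone)
qed

lemma actZ_cont: assumes g: "g \<in> carrier G" shows "continuous_map ZZ ZZ (actZ g)"
proof -
  define m where "m n = (SOME j. enum j = act (inv\<^bsub>G\<^esub> g) ` enum n)" for n
  have em: "enum (m n) = act (inv\<^bsub>G\<^esub> g) ` enum n" for n
  proof -
    have "act (inv\<^bsub>G\<^esub> g) ` enum n \<in> range enum"
      using BB_inv[OF ginv[OF g] enum_BB] range_enum by simp
    then have "\<exists>j. enum j = act (inv\<^bsub>G\<^esub> g) ` enum n" by (metis imageE)
    then show ?thesis unfolding m_def by (rule someI_ex)
  qed
  have c1: "continuous_map ZZ euclidean ((\<lambda>v n. v (m n)) \<circ> kap)"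
    unfolding ZZ_def by (rule continuous_map_pullback[OF proj_cont])
  have c2: "continuous_map ZZ euclidean (kap \<circ> actZ g)"
  proof (rule continuous_map_eq[OF c1])
    fix a assume "a \<in> topspace ZZ"
    then obtain p where p: "RO_ultrafilter X p" "a = fm p" using FF_cases topZ by blast
    have "kap (actZ g a) n = kap a (m n)" for n
    proof -
      have "kap (actZ g a) n = kap (fm (img (act g) p)) n" using equiv[OF p(1) g] p(2) by simp
      also have "\<dots> = (if enum n \<in> img (act g) p then 1 else 0)" by (rule kap_fm)
      also have "enum n \<in> img (act g) p \<longleftrightarrow> act (inv\<^bsub>G\<^esub> g) ` enum n \<in> p"
        using mem_img[OF hk[OF g] pR[OF p(1)] RO_subset] enum_BB BB_R by blast
      also have "\<dots> \<longleftrightarrow> enum (m n) \<in> p" by (simp add: em)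
      finally show ?thesis using p(2) kap_fm by simp
    qed
    then show "((\<lambda>v n. v (m n)) \<circ> kap) a = (kap \<circ> actZ g) a" by (simp add: fun_eq_iff)
  qed
  show ?thesis unfolding ZZ_def
  proof (rule continuous_map_pullback')
    show "continuous_map (pullback_topology FF kap euclidean) euclidean (kap \<circ> actZ g)"
      using c2 unfolding ZZ_def .
    show "topspace (pullback_topology FF kap euclidean) \<subseteq> actZ g -` FF"
      using actZ_FF[OF _ g] topZ unfolding ZZ_def by blast
  qed
qed

lemma kap_inj: "inj_on kap FF"
proof (rule inj_onI)
  fix a b assume a: "a \<in> FF" and b: "b \<in> FF" and eq: "kap a = kap b"
  obtain p where p: "RO_ultrafilter X p" "a = fm p" using FF_cases[OF a] by blast
  obtain q where q: "RO_ultrafilter X q" "b = fm q" using FF_cases[OF b] by blast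
  have "p \<inter> BB = q \<inter> BB"
  proof (rule equalityI; rule subsetI)
    fix B assume B: "B \<in> p \<inter> BB"
    then obtain n where n: "B = enum n" using range_enum by blast
    have "kap a n = kap b n" using eq by simp
    then have "enum n \<in> q" using B n p(2) q(2) kap_fm by (auto split: if_splits)
    then show "B \<in> q \<inter> BB" using B n by blast
  next
    fix B assume B: "B \<in> q \<inter> BB"
    then obtain n where n: "B = enum n" using range_enum by blast
    have "kap a n = kap b n" using eq by simp
    then have "enum n \<in> p" using B n p(2) q(2) kap_fm by (auto split: if_splits)
    then show "B \<in> p \<inter> BB" using B n by blast
  qed
  then show "a = b" using p(2) q(2) by (simp add: fm_def)
qed

lemma metr: "metrizable_space ZZ"
proof -
  have "homeomorphic_map ZZ (subtopology euclidean (kap ` FF)) kap"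
  proof (rule bijective_open_imp_homeomorphic_map)
    have "continuous_map ZZ euclidean (id \<circ> kap)"
      unfolding ZZ_def by (rule continuous_map_pullback) simp
    then show "continuous_map ZZ (subtopology euclidean (kap ` FF)) kap"
      by (auto simp: continuous_map_in_subtopology topZ)
    show "open_map ZZ (subtopology euclidean (kap ` FF)) kap"
      unfolding open_map_def
    proof (intro allI impI)
      fix U assume "openin ZZ U"
      then obtain V where V: "openin euclidean V" "U = kap -` V \<inter> FF"
        unfolding ZZ_def openin_pullback_topology by blast
      have "kap ` U = V \<inter> kap ` FF" using V(2) by auto
      then show "openin (subtopology euclidean (kap ` FF)) (kap ` U)"
        using V(1) by (auto simp: openin_subtopology)
    qed
    show "kap ` topspace ZZ = topspace (subtopology euclidean (kap ` FF))" by (simp add: topZ)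
    show "inj_on kap (topspace ZZ)" using kap_inj by (simp add: topZ)
  qed
  then have "ZZ homeomorphic_space (subtopology euclidean (kap ` FF))"
    by (rule homeomorphic_map_imp_homeomorphic_space)
  moreover have "metrizable_space (subtopology (euclidean :: (nat \<Rightarrow> real) topology) (kap ` FF))"
    by (rule metrizable_space_subtopology[OF metrizable_space_euclidean])
  ultimately show ?thesis using homeomorphic_metrizable_space by blast
qed

end



context fac
begin

lemma one_c: "\<one>\<^bsub>G\<^esub> \<in> carrier G" using grp by (simp add: group.is_monoid monoid.one_closed)

lemma Zflow: "G_flow G ZZ actZ"
  unfolding G_flow_def
proof (intro conjI ballI)
  show "group G" by (rule grp)
  have "compactin ZZ (fm ` topspace (StoneRO X))"
    using image_compactin[OF Stone_compact[unfolded compact_space_def] f_cont] .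
  moreover have "fm ` topspace (StoneRO X) = topspace ZZ" by (simp add: topZ FF_def topspace_Stone)
  ultimately show "compact_space ZZ" by (simp add: compact_space_def)
  show "Hausdorff_space ZZ" by (rule metrizable_imp_Hausdorff_space[OF metr])
next
  fix g assume "g \<in> carrier G" then show "continuous_map ZZ ZZ (actZ g)" by (rule actZ_cont)
next
  fix a assume "a \<in> topspace ZZ"
  then obtain p where p: "RO_ultrafilter X p" "a = fm p" using FF_cases topZ by blast
  have "img (act \<one>\<^bsub>G\<^esub>) p = p"
    using Stone_flow[OF fl] p(1) unfolding G_flow_def Stone_act_eq by (simp add: topspace_Stone)
  then show "actZ \<one>\<^bsub>G\<^esub> a = a" using equiv[OF p(1) one_c] p(2) by simp
next
  fix g h a assume g: "g \<in> carrier G" and h: "h \<in> carrier G" and "a \<in> topspace ZZ"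
  then obtain p where p: "RO_ultrafilter X p" "a = fm p" using FF_cases topZ by blast
  have gh: "g \<otimes>\<^bsub>G\<^esub> h \<in> carrier G" using grp g h by (simp add: group.is_monoid monoid.m_closed)
  have "img (act (g \<otimes>\<^bsub>G\<^esub> h)) p = img (act g) (img (act h) p)"
    using Stone_flow[OF fl] p(1) g h unfolding G_flow_def Stone_act_eq by (simp add: topspace_Stone)
  moreover have "actZ (g \<otimes>\<^bsub>G\<^esub> h) a = fm (img (act (g \<otimes>\<^bsub>G\<^esub> h)) p)" using equiv[OF p(1) gh] p(2) by simp
  moreover have "fm (img (act g) (img (act h) p)) = actZ g (fm (img (act h) p))"
    using equiv[OF ult_img[OF hk[OF h] p(1)] g] .
  moreover have "fm (img (act h) p) = actZ h a" using equiv[OF p(1) h] p(2) by simp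
  ultimately show "actZ (g \<otimes>\<^bsub>G\<^esub> h) a = actZ g (actZ h a)" by simp
qed

lemma Zfree: "free_flow G ZZ actZ"
  unfolding free_flow_def
proof (intro ballI impI)
  fix a g assume "a \<in> topspace ZZ" and g: "g \<in> carrier G" and fx: "actZ g a = a"
  then obtain p where p: "RO_ultrafilter X p" "a = fm p" using FF_cases topZ by blast
  have fx2: "img (act g) (p \<inter> BB) = p \<inter> BB" using fx p(2) by (simp add: actZ_def fm_def)
  show "g = \<one>\<^bsub>G\<^esub>"
  proof (rule ccontr)
    assume g1: "g \<noteq> \<one>\<^bsub>G\<^esub>"
    show False
    proof (rule wit_contra[OF Vw[OF g g1] p(1)])
      fix A assume A: "A \<in> {Vw g, act g ` Vw g, act (inv\<^bsub>G\<^esub> g) ` Vw g}" "A \<in> p"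
      have "A \<in> BB" using A(1) Vw_BB[OF g g1] by blast
      then have "act g ` A \<in> img (act g) (p \<inter> BB)" using A(2) by blast
      then show "act g ` A \<in> p" using fx2 by simp
    qed
  qed
qed

lemma Zfactor: "factor_map G (StoneRO X) (StoneRO_act act) ZZ actZ fm"
  unfolding factor_map_def
proof (intro conjI ballI)
  show "G_flow G ZZ actZ" by (rule Zflow)
  show "continuous_map (StoneRO X) ZZ fm" by (rule f_cont)
  show "fm ` topspace (StoneRO X) = topspace ZZ" by (simp add: topZ FF_def topspace_Stone)
next
  fix g y assume g: "g \<in> carrier G" and "y \<in> topspace (StoneRO X)"
  then have y: "RO_ultrafilter X y" by (simp add: topspace_Stone)
  show "fm (StoneRO_act act g y) = actZ g (fm y)"
    using equiv[OF y g] by (simp add: Stone_act_eq)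
qed

end

theorem proposition8p3:
  fixes G :: "('g, 'b) monoid_scheme"
    and X :: "'x topology"
    and act :: "'g \<Rightarrow> 'x \<Rightarrow> 'x"
  assumes "minimal_flow G X act"
    and "essentially_free G X act"
  shows "G_flow G (StoneRO X) (StoneRO_act act)
       \<and> free_flow G (StoneRO X) (StoneRO_act act)
       \<and> (countable (carrier G) \<longrightarrow>
           (\<exists>(Z :: 'x set set set topology) actZ f.
              factor_map G (StoneRO X) (StoneRO_act act) Z actZ f
              \<and> metrizable_space Z \<and> free_flow G Z actZ))"
proof (intro conjI impI)
  have fl: "G_flow G X act" using assms(1) by (simp add: minimal_flow_def)
  show "G_flow G (StoneRO X) (StoneRO_act act)" by (rule Stone_flow[OF fl])
  show "free_flow G (StoneRO X) (StoneRO_act act)" by (rule Stone_free[OF fl assms(2)])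
  assume c: "countable (carrier G)"
  interpret F: fac G X act using fl assms(2) c by (unfold_locales)
  show "\<exists>(Z :: 'x set set set topology) actZ f.
              factor_map G (StoneRO X) (StoneRO_act act) Z actZ f
              \<and> metrizable_space Z \<and> free_flow G Z actZ"
    using F.Zfactor F.metr F.Zfree by blast
qed


end
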